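(* Let $\mathcal{C}$ be a cyclic code of length $n$ over $\mathbb{F}_q$ with $\gcd(n,q)=1$, let $m$ be the multiplicative order of $q$ modulo $n$, and let $\alpha\in\mathbb{F}_{q^m}$ be a primitive $n$-th root of unity. Let $n_1$ be a positive divisor of $n$, put $\nu=n/n_1$ and $\beta=\alpha^{\nu}$. For $0\le i\le \nu-1$ let $\mathcal{I}_i=\{i,i+\nu,i+2\nu,\ldots,i+n-\nu\}$ and let $\mathcal{C}_{\mathcal{I}_i}=\{(c_i,c_{i+\nu},\ldots,c_{i+n-\nu}) : (c_0,\ldots,c_{n-1})\in\mathcal{C}\}$ be the code punctured to $\mathcal{I}_i$ (a cyclic code of length $n_1$). Then $$\mathcal{S}(\mathcal{C}_{\mathcal{I}_i})=\big\{\lambda \bmod n_1 : \{\lambda,\lambda+n_1,\ldots,\lambda+(\nu-1)n_1\}\subseteq \mathcal{S}(\mathcal{C})\big\},$$ i.e. for $\lambda\in\{0,\ldots,n_1-1\}$ we have $\lambda\in\mathcal{S}(\mathcal{C}_{\mathcal{I}_i})$ if and only if $\lambda+jn_1\in\mathcal{S}(\mathcal{C})$ for all $j=0,1,\ldots,\nu-1$.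
   Context: For a cyclic code $\mathcal{C}$ of length $n$ over $\mathbb{F}_q$ with $\gcd(n,q)=1$ and a primitive $n$-th root of unity $\alpha$, identify a codeword $\underline{c}=(c_0,\ldots,c_{n-1})$ with $c(x)=\sum_{i=0}^{n-1}c_ix^i$. The set of zeros of $\mathcal{C}$ is $\mathcal{S}(\mathcal{C})=\{j\in\{0,\ldots,n-1\} : c(\alpha^j)=0 \text{ for all } \underline{c}\in\mathcal{C}\}$. For the length-$n_1$ punctured code, zeros are computed with respect to $\beta=\alpha^{n/n_1}$: $\mathcal{S}(\mathcal{C}_{\mathcal{I}_i})=\{\lambda\in\{0,\ldots,n_1-1\}: \sum_{t=0}^{n_1-1}a_t\beta^{\lambda t}=0 \text{ for all } (a_0,\ldots,a_{n_1-1})\in \mathcal{C}_{\mathcal{I}_i}\}$. *)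

theory Defs
  imports "HOL-Number_Theory.Number_Theory"
begin

definition is_subfield :: "'b::field set \<Rightarrow> bool" where
  "is_subfield K \<longleftrightarrow> 0 \<in> K \<and> 1 \<in> K \<and>
     (\<forall>x\<in>K. \<forall>y\<in>K. x + y \<in> K \<and> x * y \<in> K) \<and>
     (\<forall>x\<in>K. - x \<in> K) \<and> (\<forall>x\<in>K. x \<noteq> 0 \<longrightarrow> inverse x \<in> K)"

definition cyclic_code :: "'b::field set \<Rightarrow> nat \<Rightarrow> 'b list set \<Rightarrow> bool" where
  "cyclic_code K n C \<longleftrightarrow>
     (\<forall>c\<in>C. length c = n \<and> set c \<subseteq> K) \<and>
     replicate n 0 \<in> C \<and>
     (\<forall>c\<in>C. \<forall>d\<in>C. map2 (+) c d \<in> C) \<and>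
     (\<forall>a\<in>K. \<forall>c\<in>C. map (\<lambda>x. a * x) c \<in> C) \<and>
     (\<forall>c\<in>C. rotate (n - 1) c \<in> C)"
  (* rotate (n-1) c = (c_{n-1}, c_0, ..., c_{n-2}), the cyclic right shift *)

definition primitive_root_of_unity :: "nat \<Rightarrow> 'b::field \<Rightarrow> bool" where
  "primitive_root_of_unity n a \<longleftrightarrow> a ^ n = 1 \<and> (\<forall>k. 0 < k \<and> k < n \<longrightarrow> a ^ k \<noteq> 1)"

definition zeros :: "nat \<Rightarrow> 'b::field \<Rightarrow> 'b list set \<Rightarrow> nat set" where
  "zeros n a C = {j. j < n \<and> (\<forall>c\<in>C. (\<Sum>t<n. c ! t * a ^ (j * t)) = 0)}"

definition punctured :: "nat \<Rightarrow> nat \<Rightarrow> nat \<Rightarrow> 'b list set \<Rightarrow> 'b list set" where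
  "punctured nu n1 i C = (\<lambda>c. map (\<lambda>t. c ! (i + t * nu)) [0..<n1]) ` C"

end

theory Submission
  imports Defs
begin

lemma pow_mod_n:
  fixes a :: "'a::comm_monoid_mult"
  assumes "a ^ n = 1" shows "a ^ k = a ^ (k mod n)"
proof -
  have "a ^ k = a ^ (n * (k div n) + k mod n)" by (metis div_mult_mod_eq mult.commute)
  also have "\<dots> = (a ^ n) ^ (k div n) * a ^ (k mod n)" by (simp only: power_add power_mult)
  finally show ?thesis using assms by simp
qed

lemma prim_pow_eq_1:
  fixes a :: "'a::field"
  assumes "primitive_root_of_unity n a" "0 < n"
  shows "a ^ k = 1 \<longleftrightarrow> n dvd k"
proof
  assume h: "a ^ k = 1"
  have "a ^ (k mod n) = 1" using h pow_mod_n[of a n k] assms(1)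
    by (simp add: primitive_root_of_unity_def)
  moreover have "k mod n < n" using assms(2) by simp
  ultimately have "k mod n = 0" using assms(1) unfolding primitive_root_of_unity_def
    by (metis bot_nat_0.not_eq_extremum)
  then show "n dvd k" by auto
next
  assume "n dvd k"
  then obtain r where "k = n * r" by auto
  then show "a ^ k = 1" using assms(1) by (simp add: power_mult primitive_root_of_unity_def)
qed

lemma geo_zero:
  fixes z :: "'a::field"
  assumes "z ^ N = 1" "z \<noteq> 1" shows "(\<Sum>r<N. z ^ r) = 0"
  using assms by (simp add: sum_gp_strict)

lemma char_ok:
  fixes K :: "'b::{field,finite} set"
  assumes "is_subfield K" "card K = q" "coprime n q"
  shows "of_nat n \<noteq> (0::'b)"
proof -
  have bij: "bij_betw (\<lambda>y. y + 1) K K"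
  proof (rule bij_betwI[where g = "\<lambda>y. y - 1"])
    show "(\<lambda>y. y + 1) \<in> K \<rightarrow> K" using assms(1) unfolding is_subfield_def by auto
    show "(\<lambda>y. y - 1) \<in> K \<rightarrow> K" using assms(1) unfolding is_subfield_def
      by (metis (no_types, lifting) Pi_I diff_conv_add_uminus)
  qed auto
  have "(\<Sum>y\<in>K. y) = (\<Sum>y\<in>K. y + 1)"
    using sum.reindex_bij_betw[OF bij, of "\<lambda>y. y"] by simp
  also have "\<dots> = (\<Sum>y\<in>K. y) + of_nat q" using assms(2) by (simp add: sum.distrib)
  finally have q0: "of_nat q = (0::'b)" by simp
  show ?thesis
  proof
    assume "of_nat n = (0::'b)"
    then have "CHAR('b) dvd n" "CHAR('b) dvd q" using q0 by (simp_all add: of_nat_eq_0_iff_char_dvd)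
    then have "CHAR('b) = 1" using assms(3) coprime_common_divisor_nat by blast
    then show False by simp
  qed
qed


lemma dft_shift:
  fixes \<alpha> :: "'b::field"
  assumes "\<alpha> ^ n = 1" "length c = n" "0 < n"
  shows "(\<Sum>t<n. c ! t * \<alpha> ^ (j * t)) = \<alpha> ^ (j * k) * (\<Sum>t<n. rotate k c ! t * \<alpha> ^ (j * t))"
proof -
  have aj: "(\<alpha> ^ j) ^ n = 1" using assms(1) by (metis power_mult mult.commute power_one)
  have inj: "inj_on (\<lambda>t. (k + t) mod n) {..<n}"
  proof
    fix a b assume "a \<in> {..<n}" "b \<in> {..<n}" "(k + a) mod n = (k + b) mod n"
    then have "[k + a = k + b] (mod n)" by (simp add: cong_def)
    then have "[a = b] (mod n)" by (simp add: cong_add_lcancel_nat)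
    then show "a = b" using \<open>a \<in> {..<n}\<close> \<open>b \<in> {..<n}\<close> by (simp add: cong_def)
  qed
  have img: "(\<lambda>t. (k + t) mod n) ` {..<n} = {..<n}"
    using inj by (simp add: assms(3) endo_inj_surj image_subsetI)
  have "\<alpha> ^ (j * k) * (\<Sum>t<n. rotate k c ! t * \<alpha> ^ (j * t))
        = (\<Sum>t<n. c ! ((k + t) mod n) * (\<alpha> ^ j) ^ (k + t))"
    unfolding sum_distrib_left
  proof (rule sum.cong[OF refl])
    fix t assume "t \<in> {..<n}"
    then have "rotate k c ! t = c ! ((k + t) mod n)" using assms(2) by (simp add: nth_rotate)
    moreover have "(\<alpha> ^ j) ^ (k + t) = \<alpha> ^ (j * k) * \<alpha> ^ (j * t)"
      by (simp add: power_mult[symmetric] distrib_left power_add)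
    ultimately show "\<alpha> ^ (j * k) * (rotate k c ! t * \<alpha> ^ (j * t)) = c ! ((k + t) mod n) * (\<alpha> ^ j) ^ (k + t)"
      by simp
  qed
  also have "\<dots> = (\<Sum>t<n. c ! ((k + t) mod n) * (\<alpha> ^ j) ^ ((k + t) mod n))"
    using pow_mod_n[OF aj] by metis
  also have "\<dots> = (\<Sum>u\<in>(\<lambda>t. (k + t) mod n) ` {..<n}. c ! u * (\<alpha> ^ j) ^ u)"
    by (simp add: sum.reindex[OF inj])
  also have "\<dots> = (\<Sum>t<n. c ! t * \<alpha> ^ (j * t))" by (simp add: img power_mult)
  finally show ?thesis by simp
qed


lemma orth:
  fixes \<alpha> :: "'b::field"
  assumes prim: "primitive_root_of_unity n \<alpha>" and "0 < n" "n = n1 * \<nu>" "0 < n1"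
  shows "(\<Sum>r<\<nu>. ((\<alpha> ^ n1) ^ d) ^ r) = (if \<nu> dvd d then of_nat \<nu> else 0)"
proof -
  have key: "(\<alpha> ^ n1) ^ d = 1 \<longleftrightarrow> \<nu> dvd d"
    using prim_pow_eq_1[OF prim assms(2), of "n1 * d"] assms(3,4)
    by (simp add: power_mult)
  show ?thesis
  proof (cases "\<nu> dvd d")
    case True
    then show ?thesis using key by simp
  next
    case False
    have "((\<alpha> ^ n1) ^ d) ^ \<nu> = (\<alpha> ^ n) ^ d" using assms(3)
      by (simp add: power_mult[symmetric] mult.commute mult.left_commute)
    also have "\<dots> = 1" using prim by (simp add: primitive_root_of_unity_def)
    finally show ?thesis using False key geo_zero by auto
  qed
qed

lemma E_ident:
  fixes \<alpha> :: "'b::field"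
  assumes prim: "primitive_root_of_unity n \<alpha>" and "0 < n" "n = n1 * \<nu>" "0 < n1" "i < \<nu>"
  shows "(\<Sum>s<\<nu>. \<alpha> ^ (n1 * s * (\<nu> - i)) * (\<Sum>t<n. c ! t * \<alpha> ^ ((l + s * n1) * t)))
     = of_nat \<nu> * \<alpha> ^ (l * i) * (\<Sum>t<n1. c ! (i + t * \<nu>) * (\<alpha> ^ \<nu>) ^ (l * t))"
proof -
  have seteq: "{t. t < n \<and> t mod \<nu> = i} = (\<lambda>t. i + t * \<nu>) ` {..<n1}"
  proof (rule Set.set_eqI, rule iffI)
    fix x assume "x \<in> {t. t < n \<and> t mod \<nu> = i}"
    then have x: "x < n" "x mod \<nu> = i" by auto
    have "x = i + (x div \<nu>) * \<nu>" using x(2) by (metis mod_div_mult_eq add.commute)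
    moreover have "x div \<nu> < n1" using x(1) assms(3) assms(5)
      by (metis less_mult_imp_div_less mult.commute)
    ultimately show "x \<in> (\<lambda>t. i + t * \<nu>) ` {..<n1}" by blast
  next
    fix x assume "x \<in> (\<lambda>t. i + t * \<nu>) ` {..<n1}"
    then obtain t where t: "t < n1" "x = i + t * \<nu>" by auto
    have "i + t * \<nu> < \<nu> + t * \<nu>" using assms(5) by simp
    also have "\<dots> \<le> n" using t(1) assms(3) by (metis Suc_leI mult.commute mult_Suc_right mult_le_mono2 add.commute)
    finally show "x \<in> {t. t < n \<and> t mod \<nu> = i}" using t assms(5) by simp
  qed
  have "(\<Sum>s<\<nu>. \<alpha> ^ (n1 * s * (\<nu> - i)) * (\<Sum>t<n. c ! t * \<alpha> ^ ((l + s * n1) * t)))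
      = (\<Sum>s<\<nu>. \<Sum>t<n. c ! t * \<alpha> ^ (l * t) * ((\<alpha> ^ n1) ^ (\<nu> - i + t)) ^ s)"
    unfolding sum_distrib_left
  proof (intro sum.cong refl)
    fix s t
    have "n1 * s * (\<nu> - i) + (l + s * n1) * t = l * t + n1 * (\<nu> - i + t) * s"
      by (simp add: algebra_simps)
    then have "\<alpha> ^ (n1 * s * (\<nu> - i)) * \<alpha> ^ ((l + s * n1) * t) = \<alpha> ^ (l * t) * ((\<alpha> ^ n1) ^ (\<nu> - i + t)) ^ s"
      by (metis power_add power_mult)
    then show "\<alpha> ^ (n1 * s * (\<nu> - i)) * (c ! t * \<alpha> ^ ((l + s * n1) * t)) =
         c ! t * \<alpha> ^ (l * t) * ((\<alpha> ^ n1) ^ (\<nu> - i + t)) ^ s"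
      by (metis mult.assoc mult.left_commute)
  qed
  also have "\<dots> = (\<Sum>t<n. c ! t * \<alpha> ^ (l * t) * (\<Sum>s<\<nu>. ((\<alpha> ^ n1) ^ (\<nu> - i + t)) ^ s))"
    by (subst sum.swap) (simp add: sum_distrib_left)
  also have "\<dots> = (\<Sum>t<n. if t mod \<nu> = i then of_nat \<nu> * (c ! t * \<alpha> ^ (l * t)) else 0)"
  proof (intro sum.cong refl)
    fix t
    have "\<nu> dvd (\<nu> - i + t) \<longleftrightarrow> t mod \<nu> = i"
    proof -
      have "\<nu> - i + t = t + (\<nu> - i)" by simp
      have "\<nu> dvd (\<nu> - i + t) \<longleftrightarrow> [t + (\<nu> - i) = i + (\<nu> - i)] (mod \<nu>)"
        using assms(5) by (simp add: cong_def add.commute dvd_eq_mod_eq_0)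
      also have "\<dots> \<longleftrightarrow> [t = i] (mod \<nu>)" by (simp add: cong_add_rcancel_nat)
      also have "\<dots> \<longleftrightarrow> t mod \<nu> = i" using assms(5) by (simp add: cong_def)
      finally show ?thesis .
    qed
    then show "c ! t * \<alpha> ^ (l * t) * (\<Sum>s<\<nu>. ((\<alpha> ^ n1) ^ (\<nu> - i + t)) ^ s) =
         (if t mod \<nu> = i then of_nat \<nu> * (c ! t * \<alpha> ^ (l * t)) else 0)"
      using orth[OF prim assms(2,3,4), of "\<nu> - i + t"] by simp
  qed
  also have "\<dots> = of_nat \<nu> * (\<Sum>t\<in>{t. t < n \<and> t mod \<nu> = i}. c ! t * \<alpha> ^ (l * t))"
    by (simp add: sum.If_cases sum_distrib_left lessThan_def Collect_conj_eq Int_commute)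
  also have "\<dots> = of_nat \<nu> * (\<Sum>t\<in>(\<lambda>t. i + t * \<nu>) ` {..<n1}. c ! t * \<alpha> ^ (l * t))"
    by (simp only: seteq)
  also have "\<dots> = of_nat \<nu> * (\<Sum>t<n1. c ! (i + t * \<nu>) * \<alpha> ^ (l * (i + t * \<nu>)))"
    using assms(5) by (subst sum.reindex) (auto simp: inj_on_def)
  also have "(\<Sum>t<n1. c ! (i + t * \<nu>) * \<alpha> ^ (l * (i + t * \<nu>))) = \<alpha> ^ (l * i) * (\<Sum>t<n1. c ! (i + t * \<nu>) * (\<alpha> ^ \<nu>) ^ (l * t))"
    unfolding sum_distrib_left
    by (intro sum.cong refl) (simp add: power_add power_mult[symmetric] algebra_simps)
  finally show ?thesis by (simp add: mult.assoc)
qed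


lemma sq_mod: "0 < (n::nat) \<Longrightarrow> ((n - 1) * (n - 1)) mod n = 1 mod n"
proof (cases "n = 1")
  case False
  assume "0 < n"
  then obtain m where m: "n = Suc (Suc m)" using False
    by (metis One_nat_def Suc_pred not0_implies_Suc)
  have "(n - 1) * (n - 1) = 1 + m * n" using m by (simp add: algebra_simps)
  moreover have "(1 + m * n) mod n = 1 mod n" by (rule mod_mult_self1)
  ultimately show ?thesis by (simp only:)
qed simp

lemma rot_closed:
  assumes cc: "cyclic_code K n C" and "0 < n" and "c \<in> C"
  shows "rotate k c \<in> C"
proof -
  have A: "\<And>x. x \<in> C \<Longrightarrow> rotate (n - 1) x \<in> C" and L: "\<And>x. x \<in> C \<Longrightarrow> length x = n"
    using cc unfolding cyclic_code_def by auto
  have B: "x \<in> C \<Longrightarrow> rotate (r * (n - 1)) x \<in> C" for x r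
  proof (induction r)
    case 0 then show ?case by simp
  next
    case (Suc r)
    then have "rotate (n - 1) (rotate (r * (n - 1)) x) \<in> C" using A by blast
    then show ?case by (simp add: rotate_rotate add.commute)
  qed
  have R1: "x \<in> C \<Longrightarrow> rotate 1 x \<in> C" for x
  proof -
    assume x: "x \<in> C"
    have "rotate 1 x = rotate ((n - 1) * (n - 1)) x"
      using rotate_conv_mod[of "(n - 1) * (n - 1)" x] rotate_conv_mod[of 1 x] L[OF x] sq_mod[OF assms(2)]
      by simp
    then show ?thesis using B[OF x, of "n - 1"] by simp
  qed
  show ?thesis
  proof (induction k)
    case 0 then show ?case using assms(3) by simp
  next
    case (Suc k)
    then have "rotate 1 (rotate k c) \<in> C" using R1 by blast
    then show ?case by (simp add: rotate_rotate)
  qed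
qed

theorem lemma2:
  fixes K :: "'b::{field,finite} set" and q n m n1 \<nu> i :: nat
    and \<alpha> \<beta> :: 'b and C :: "'b list set"
  assumes "is_subfield K" and "card K = q"
    and "0 < n" and "coprime n q"
    and "m = ord n q" and "card (UNIV :: 'b set) = q ^ m"
    and "cyclic_code K n C"
    and "primitive_root_of_unity n \<alpha>"
    and "0 < n1" and "n1 dvd n" and "\<nu> = n div n1" and "\<beta> = \<alpha> ^ \<nu>"
    and "i < \<nu>"
  shows "\<forall>l<n1. l \<in> zeros n1 \<beta> (punctured \<nu> n1 i C) \<longleftrightarrow>
                 (\<forall>j<\<nu>. l + j * n1 \<in> zeros n \<alpha> C)"
proof (intro allI impI)
  fix l assume l: "l < n1"
  note prim = assms(8)
  have nn: "n = n1 * \<nu>" using assms(10,11) by simp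
  have a1: "\<alpha> ^ n = 1" using prim by (simp add: primitive_root_of_unity_def)
  have a0: "\<alpha> \<noteq> 0"
  proof
    assume "\<alpha> = 0"
    then have "\<alpha> ^ n = 0" using assms(3) by simp
    then show False using a1 by simp
  qed
  have nu0: "of_nat \<nu> \<noteq> (0::'b)"
  proof
    assume "of_nat \<nu> = (0::'b)"
    then have "of_nat n = (0::'b)" using nn by simp
    then show False using char_ok[OF assms(1,2,4)] by simp
  qed
  have len: "\<And>c. c \<in> C \<Longrightarrow> length c = n" using assms(7) unfolding cyclic_code_def by auto
  define CC where "CC c j = (\<Sum>t<n. c ! t * \<alpha> ^ (j * t))" for c j
  define A where "A c = (\<Sum>t<n1. c ! (i + t * \<nu>) * \<beta> ^ (l * t))" for c
  define w where "w s = \<alpha> ^ (n1 * s * (\<nu> - i))" for s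
  have E: "(\<Sum>s<\<nu>. w s * CC c (l + s * n1)) = of_nat \<nu> * \<alpha> ^ (l * i) * A c" for c
    unfolding w_def CC_def A_def assms(12) using E_ident[OF prim assms(3) nn assms(9,13)] by simp
  have w0: "w s \<noteq> 0" for s using a0 by (simp add: w_def)
  have lj: "l + j * n1 < n" if "j < \<nu>" for j
  proof -
    have "l + j * n1 < n1 + j * n1" using l by simp
    also have "\<dots> = Suc j * n1" by simp
    also have "\<dots> \<le> \<nu> * n1" by (rule mult_le_mono1) (use that in simp)
    finally show ?thesis using nn by (simp add: mult.commute)
  qed
  have Zp: "l \<in> zeros n1 \<beta> (punctured \<nu> n1 i C) \<longleftrightarrow> (\<forall>c\<in>C. A c = 0)"
  proof -
    have "(\<Sum>t<n1. map (\<lambda>t. c ! (i + t * \<nu>)) [0..<n1] ! t * \<beta> ^ (l * t)) = A c" for c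
      unfolding A_def by (intro sum.cong refl) simp
    then show ?thesis using l by (simp add: zeros_def punctured_def)
  qed
  have Zc: "l + j * n1 \<in> zeros n \<alpha> C \<longleftrightarrow> (\<forall>c\<in>C. CC c (l + j * n1) = 0)" if "j < \<nu>" for j
    using lj[OF that] by (simp add: zeros_def CC_def)
  show "l \<in> zeros n1 \<beta> (punctured \<nu> n1 i C) \<longleftrightarrow> (\<forall>j<\<nu>. l + j * n1 \<in> zeros n \<alpha> C)"
  proof
    assume "\<forall>j<\<nu>. l + j * n1 \<in> zeros n \<alpha> C"
    then have H: "\<And>j c. j < \<nu> \<Longrightarrow> c \<in> C \<Longrightarrow> CC c (l + j * n1) = 0" using Zc by blast
    show "l \<in> zeros n1 \<beta> (punctured \<nu> n1 i C)" unfolding Zp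
    proof
      fix c assume c: "c \<in> C"
      have "of_nat \<nu> * \<alpha> ^ (l * i) * A c = 0" unfolding E[symmetric] using H[OF _ c] by simp
      then show "A c = 0" using nu0 a0 by simp
    qed
  next
    assume "l \<in> zeros n1 \<beta> (punctured \<nu> n1 i C)"
    then have H: "\<And>c. c \<in> C \<Longrightarrow> A c = 0" using Zp by blast
    show "\<forall>j<\<nu>. l + j * n1 \<in> zeros n \<alpha> C"
    proof (intro allI impI)
      fix j assume j: "j < \<nu>"
      show "l + j * n1 \<in> zeros n \<alpha> C" unfolding Zc[OF j]
      proof
        fix c assume c: "c \<in> C"
        define x where "x s = w s * CC c (l + s * n1)" for s
        have S: "(\<Sum>s<\<nu>. x s * ((\<alpha> ^ n1) ^ s) ^ r) = 0" if r: "r < \<nu>" for r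
        proof -
          define d where "d = rotate (n - r) c"
          have dC: "d \<in> C" unfolding d_def using rot_closed[OF assms(7,3) c] .
          have "\<nu> \<le> n" using nn assms(9) by (cases n1) auto
          then have "r \<le> n" using r by simp
          then have rd: "rotate r d = c" unfolding d_def by (simp add: rotate_rotate len[OF c])
          have Cd: "CC d jj = \<alpha> ^ (jj * r) * CC c jj" for jj
            unfolding CC_def using dft_shift[OF a1 len[OF dC] assms(3), of jj r] rd by simp
          have "0 = of_nat \<nu> * \<alpha> ^ (l * i) * A d" using H[OF dC] by simp
          also have "\<dots> = (\<Sum>s<\<nu>. w s * CC d (l + s * n1))" using E by simp
          also have "\<dots> = \<alpha> ^ (l * r) * (\<Sum>s<\<nu>. x s * ((\<alpha> ^ n1) ^ s) ^ r)"
            unfolding sum_distrib_left x_def Cd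
          proof (intro sum.cong refl)
            fix s
            have "(l + s * n1) * r = l * r + n1 * s * r" by (simp add: algebra_simps)
            then have "\<alpha> ^ ((l + s * n1) * r) = \<alpha> ^ (l * r) * ((\<alpha> ^ n1) ^ s) ^ r"
              by (metis power_add power_mult)
            then show "w s * (\<alpha> ^ ((l + s * n1) * r) * CC c (l + s * n1)) =
                \<alpha> ^ (l * r) * (w s * CC c (l + s * n1) * ((\<alpha> ^ n1) ^ s) ^ r)"
              by (simp add: mult_ac)
          qed
          finally show ?thesis using a0 by simp
        qed
        have "0 = (\<Sum>r<\<nu>. ((\<alpha> ^ n1) ^ (\<nu> - j)) ^ r * (\<Sum>s<\<nu>. x s * ((\<alpha> ^ n1) ^ s) ^ r))"
          using S by simp
        also have "\<dots> = (\<Sum>s<\<nu>. x s * (\<Sum>r<\<nu>. ((\<alpha> ^ n1) ^ (\<nu> - j + s)) ^ r))"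
          unfolding sum_distrib_left
        proof (subst sum.swap, intro sum.cong refl)
          fix s r
          have "((\<alpha> ^ n1) ^ (\<nu> - j)) ^ r * ((\<alpha> ^ n1) ^ s) ^ r = ((\<alpha> ^ n1) ^ (\<nu> - j + s)) ^ r"
            by (simp add: power_add power_mult_distrib)
          then show "((\<alpha> ^ n1) ^ (\<nu> - j)) ^ r * (x s * ((\<alpha> ^ n1) ^ s) ^ r) =
              x s * ((\<alpha> ^ n1) ^ (\<nu> - j + s)) ^ r"
            by (metis mult.assoc mult.commute)
        qed
        also have "\<dots> = (\<Sum>s<\<nu>. if s = j then of_nat \<nu> * x s else 0)"
        proof (intro sum.cong refl)
          fix s assume "s \<in> {..<\<nu>}"
          then have s: "s < \<nu>" by simp
          have "\<nu> dvd (\<nu> - j + s) \<longleftrightarrow> s = j"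
          proof
            assume dv: "\<nu> dvd (\<nu> - j + s)"
            have "\<nu> - j + s < 2 * \<nu>" using s j by simp
            moreover have "0 < \<nu> - j + s" using j by simp
            moreover obtain k where k: "\<nu> - j + s = \<nu> * k" using dv by blast
            ultimately have "\<nu> * k < \<nu> * 2" "0 < k" by (simp_all add: mult.commute)
            then have "k = 1" by simp
            then have "\<nu> - j + s = \<nu>" using k by simp
            then show "s = j" using j by simp
          qed (use j in simp)
          then show "x s * (\<Sum>r<\<nu>. ((\<alpha> ^ n1) ^ (\<nu> - j + s)) ^ r) = (if s = j then of_nat \<nu> * x s else 0)"
            using orth[OF prim assms(3) nn assms(9), of "\<nu> - j + s"] by simp
        qed
        also have "\<dots> = of_nat \<nu> * x j" using j by simp
        finally have "x j = 0" using nu0 by simp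
        then show "CC c (l + j * n1) = 0" using w0 unfolding x_def by simp
      qed
    qed
  qed
qed

end
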